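(* For every integer $n\ge 1$, the restriction to $\mathfrak{sl}(n+1)$ of the functional $$F_n=\sum_{i=1}^{n}\sum_{j=1}^{n+1-i}e_{i,j}^*$$ (a sum of coordinate functionals on $(n+1)\times(n+1)$ matrices, all strictly above the antidiagonal) is regular on $A_n=\mathfrak{sl}(n+1)$, i.e. the kernel of its Kirillov form on $\mathfrak{sl}(n+1)$ has dimension $n$.
   Context: Over $\mathbb{C}$. $e_{i,j}^*(X)=X_{i,j}$. For a Lie algebra $\mathfrak{g}$ and $f\in\mathfrak{g}^*$, $B_f(x,y)=f([x,y])$, $\ker(B_f)=\{x\in\mathfrak{g}: f([x,y])=0\ \forall y\in\mathfrak{g}\}$, and $f$ is regular if $\dim\ker(B_f)=\operatorname{ind}\mathfrak{g}:=\min_{g\in\mathfrak{g}^*}\dim\ker(B_g)$. It is known that $\operatorname{ind}\mathfrak{sl}(n+1)=n$. *)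

theory Defs
  imports Complex_Main "HOL-Library.Function_Algebras"
begin

text \<open>Square matrices of size m (indices 1..m) over the complex numbers are represented
  as functions nat => nat => complex vanishing outside {1..m} x {1..m}.
  Entry (i,j) of X is X i j, so the coordinate functional e_{i,j}^* is (\<lambda>X. X i j).\<close>

type_synonym cmat = "nat \<Rightarrow> nat \<Rightarrow> complex"

definition mscale :: "complex \<Rightarrow> cmat \<Rightarrow> cmat" where
  "mscale c X = (\<lambda>i j. c * X i j)"

definition mat_space :: "nat \<Rightarrow> cmat set" where
  "mat_space m = {X. \<forall>i j. (i \<notin> {1..m} \<or> j \<notin> {1..m}) \<longrightarrow> X i j = 0}"

definition mmult :: "nat \<Rightarrow> cmat \<Rightarrow> cmat \<Rightarrow> cmat" where
  "mmult m X Y = (\<lambda>i j. \<Sum>k=1..m. X i k * Y k j)"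

definition mbracket :: "nat \<Rightarrow> cmat \<Rightarrow> cmat \<Rightarrow> cmat" where
  "mbracket m X Y = mmult m X Y - mmult m Y X"

definition mtrace :: "nat \<Rightarrow> cmat \<Rightarrow> complex" where
  "mtrace m X = (\<Sum>i=1..m. X i i)"

definition sl :: "nat \<Rightarrow> cmat set" where
  "sl m = {X \<in> mat_space m. mtrace m X = 0}"

definition kirillov_ker :: "nat \<Rightarrow> (cmat \<Rightarrow> complex) \<Rightarrow> cmat set" where
  "kirillov_ker m f = {X \<in> sl m. \<forall>Y \<in> sl m. f (mbracket m X Y) = 0}"

definition cdim :: "cmat set \<Rightarrow> nat" where
  "cdim V = vector_space.dim mscale V"

definition F :: "nat \<Rightarrow> cmat \<Rightarrow> complex" where
  "F n X = (\<Sum>i=1..n. \<Sum>j=1..n+1-i. X i j)"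

end

theory Submission
  imports Defs
begin


lemma mmult_assoc: "mmult m (mmult m A B) C = mmult m A (mmult m B C)"
  unfolding mmult_def
  apply (rule ext)+
  apply (simp add: sum_distrib_left sum_distrib_right mult.assoc)
  apply (rule sum.swap)
  done

lemma mmult_diff_right: "mmult m A (B - C) = mmult m A B - mmult m A C"
  unfolding mmult_def by (auto intro!: ext simp: algebra_simps sum_subtractf)

lemma mmult_scale_right: "mmult m A (mscale c B) = mscale c (mmult m A B)"
  unfolding mmult_def mscale_def by (auto intro!: ext simp: algebra_simps sum_distrib_left)

lemma mmult_diff_left: "mmult m (B - C) A = mmult m B A - mmult m C A"
  unfolding mmult_def by (auto intro!: ext simp: algebra_simps sum_subtractf)

lemma mmult_scale_left: "mmult m (mscale c B) A = mscale c (mmult m B A)"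
  unfolding mmult_def mscale_def by (auto intro!: ext simp: algebra_simps sum_distrib_left)

interpretation mv: vector_space mscale
  by unfold_locales (auto simp: mscale_def algebra_simps intro!: ext)


definition Nm :: "nat \<Rightarrow> cmat" where
  "Nm n = (\<lambda>i j. if 1 \<le> i \<and> i \<le> n \<and> 1 \<le> j \<and> j \<le> n then
     (if i + j = n + 1 then 1 else if i + j = n + 2 then -1 else 0) else 0)"

lemma Nm_pt: "1 \<le> i \<Longrightarrow> i \<le> n \<Longrightarrow> 1 \<le> k \<Longrightarrow> k \<le> n + 1 \<Longrightarrow>
   Nm n i k = (if k = n+1-i then 1 else 0) - (if k = n+2-i \<and> 2 \<le> i then 1 else 0)"
  unfolding Nm_def by auto

lemma Nm_pt': "1 \<le> j \<Longrightarrow> j \<le> n \<Longrightarrow> 1 \<le> k \<Longrightarrow> k \<le> n + 1 \<Longrightarrow>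
   Nm n k j = (if k = n+1-j then 1 else 0) - (if k = n+2-j \<and> 2 \<le> j then 1 else 0)"
  unfolding Nm_def by auto

lemma Nm_out: "\<not> (1 \<le> i \<and> i \<le> n) \<Longrightarrow> Nm n i k = 0"
  unfolding Nm_def by auto
lemma Nm_out': "\<not> (1 \<le> j \<and> j \<le> n) \<Longrightarrow> Nm n k j = 0"
  unfolding Nm_def by auto

lemma sum_delta2: "finite S \<Longrightarrow> (\<Sum>k\<in>S. (if k = a then 1 else 0) * f k) = (if a \<in> S then f a else (0::complex))"
proof -
  assume "finite S"
  have "(\<Sum>k\<in>S. (if k = a then 1 else 0) * f k) = (\<Sum>k\<in>S. if k = a then f k else 0)" by (rule sum.cong) auto
  thus ?thesis using \<open>finite S\<close> by (simp add: sum.delta)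
qed

lemma sum_delta3: "finite S \<Longrightarrow> (\<Sum>k\<in>S. f k * (if k = a then 1 else 0)) = (if a \<in> S then f a else (0::complex))"
proof -
  assume "finite S"
  have "(\<Sum>k\<in>S. f k * (if k = a then 1 else 0)) = (\<Sum>k\<in>S. if k = a then f k else 0)" by (rule sum.cong) auto
  thus ?thesis using \<open>finite S\<close> by (simp add: sum.delta)
qed

lemma N_row: "mmult (Suc n) (Nm n) Y i j =
   (if 1 \<le> i \<and> i \<le> n then Y (n+1-i) j - (if 2 \<le> i then Y (n+2-i) j else 0) else 0)"
proof (cases "1 \<le> i \<and> i \<le> n")
  case True
  have "mmult (Suc n) (Nm n) Y i j = (\<Sum>k\<in>{1..n+1}. (if k = n+1-i then 1 else 0) * Y k j -
        (if k = n+2-i \<and> 2 \<le> i then 1 else 0) * Y k j)"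
    unfolding mmult_def using True by (intro sum.cong) (auto simp: Nm_pt left_diff_distrib)
  also have "\<dots> = Y (n+1-i) j - (if 2 \<le> i then Y (n+2-i) j else 0)"
  proof -
    have e: "(\<lambda>k. (if k = n+2-i \<and> 2 \<le> i then 1 else 0)) = (\<lambda>k. if 2 \<le> i then (if k = n+2-i then 1 else 0) else (0::complex))"
      by auto
    show ?thesis using True unfolding sum_subtractf e by (auto simp: sum_delta2)
  qed
  finally show ?thesis using True by simp
next
  case False
  have z: "mmult (Suc n) (Nm n) Y i j = 0" unfolding mmult_def using False by (simp add: Nm_out)
  show ?thesis by (simp only: z if_not_P[OF False])
qed

lemma N_col: "mmult (Suc n) Y (Nm n) i j =
   (if 1 \<le> j \<and> j \<le> n then Y i (n+1-j) - (if 2 \<le> j then Y i (n+2-j) else 0) else 0)"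
proof (cases "1 \<le> j \<and> j \<le> n")
  case True
  have "mmult (Suc n) Y (Nm n) i j = (\<Sum>k\<in>{1..n+1}. Y i k * (if k = n+1-j then 1 else 0) -
        Y i k * (if k = n+2-j \<and> 2 \<le> j then 1 else 0))"
    unfolding mmult_def using True by (intro sum.cong) (auto simp: Nm_pt' right_diff_distrib)
  also have "\<dots> = Y i (n+1-j) - (if 2 \<le> j then Y i (n+2-j) else 0)"
  proof -
    have e: "(\<lambda>k. (if k = n+2-j \<and> 2 \<le> j then 1 else 0)) = (\<lambda>k. if 2 \<le> j then (if k = n+2-j then 1 else 0) else (0::complex))"
      by auto
    show ?thesis using True unfolding sum_subtractf e by (auto simp: sum_delta3)
  qed
  finally show ?thesis using True by simp
next
  case False
  have z: "mmult (Suc n) Y (Nm n) i j = 0" unfolding mmult_def using False by (simp add: Nm_out')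
  show ?thesis by (simp only: z if_not_P[OF False])
qed

definition Mm :: "nat \<Rightarrow> cmat" where
  "Mm n = (\<lambda>i j. if 1 \<le> i \<and> 1 \<le> j \<and> i + j \<le> n + 1 then 1 else 0)"
definition Em :: "nat \<Rightarrow> cmat" where
  "Em n = (\<lambda>i j. if i = j \<and> 1 \<le> i \<and> i \<le> n then 1 else 0)"
definition Um :: "nat \<Rightarrow> nat \<Rightarrow> cmat" where
  "Um a b = (\<lambda>i j. if i = a \<and> j = b then 1 else 0)"

lemma E_right: "mmult (Suc n) X (Em n) i j = (if 1 \<le> j \<and> j \<le> n then X i j else 0)"
proof (cases "1 \<le> j \<and> j \<le> n")
  case True
  have "mmult (Suc n) X (Em n) i j = (\<Sum>k\<in>{1..Suc n}. X i k * (if k = j then 1 else 0))"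
    unfolding mmult_def Em_def using True by (intro sum.cong) auto
  thus ?thesis using True by (simp add: sum_delta3)
next
  case False
  have z: "mmult (Suc n) X (Em n) i j = 0" unfolding mmult_def Em_def using False by (intro sum.neutral) auto
  show ?thesis by (simp only: z if_not_P[OF False])
qed

lemma E_left: "mmult (Suc n) (Em n) X i j = (if 1 \<le> i \<and> i \<le> n then X i j else 0)"
proof (cases "1 \<le> i \<and> i \<le> n")
  case True
  have "mmult (Suc n) (Em n) X i j = (\<Sum>k\<in>{1..Suc n}. (if k = i then 1 else 0) * X k j)"
    unfolding mmult_def Em_def using True by (intro sum.cong) auto
  thus ?thesis using True by (simp add: sum_delta2)
next
  case False
  have z: "mmult (Suc n) (Em n) X i j = 0" unfolding mmult_def Em_def using False by (intro sum.neutral) auto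
  show ?thesis by (simp only: z if_not_P[OF False])
qed

lemma U_right: "a \<in> {1..m} \<Longrightarrow> mmult m A (Um a b) i j = (if j = b then A i a else 0)"
proof -
  assume a: "a \<in> {1..m}"
  have "mmult m A (Um a b) i j = (\<Sum>k\<in>{1..m}. (if j = b then A i k else 0) * (if k = a then 1 else 0))"
    unfolding mmult_def Um_def by (intro sum.cong) auto
  thus ?thesis using a by (simp add: sum_delta3)
qed

lemma U_left: "b \<in> {1..m} \<Longrightarrow> mmult m (Um a b) A i j = (if i = a then A b j else 0)"
proof -
  assume a: "b \<in> {1..m}"
  have "mmult m (Um a b) A i j = (\<Sum>k\<in>{1..m}. (if k = b then 1 else 0) * (if i = a then A k j else 0))"
    unfolding mmult_def Um_def by (intro sum.cong) auto
  thus ?thesis using a by (simp add: sum_delta2)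
qed

lemma M_last_row: "mmult (Suc n) (Mm n) Z (Suc n) j = 0"
  unfolding mmult_def Mm_def by simp

lemma M_last_col: "mmult (Suc n) Z (Mm n) i (Suc n) = 0"
  unfolding mmult_def Mm_def by simp

lemma MN: "mmult (Suc n) (Mm n) (Nm n) = Em n"
proof (intro ext)
  fix i j
  show "mmult (Suc n) (Mm n) (Nm n) i j = Em n i j"
    by (subst N_col) (auto simp: Mm_def Em_def)
qed

lemma NM: "mmult (Suc n) (Nm n) (Mm n) = Em n"
proof (intro ext)
  fix i j
  show "mmult (Suc n) (Nm n) (Mm n) i j = Em n i j"
    by (subst N_row) (auto simp: Mm_def Em_def)
qed

lemma EN: "mmult (Suc n) (Em n) (Nm n) = Nm n"
  by (intro ext, subst E_left) (auto simp: Nm_def)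
lemma NE: "mmult (Suc n) (Nm n) (Em n) = Nm n"
  by (intro ext, subst E_right) (auto simp: Nm_def)
lemma EM: "mmult (Suc n) (Em n) (Mm n) = Mm n"
  by (intro ext, subst E_left) (auto simp: Mm_def)
lemma ME: "mmult (Suc n) (Mm n) (Em n) = Mm n"
  by (intro ext, subst E_right) (auto simp: Mm_def)


definition Kc :: "nat \<Rightarrow> cmat set" where
  "Kc n = {X \<in> sl (Suc n). mmult (Suc n) (Mm n) X = mmult (Suc n) X (Mm n)}"

lemma F_expand: "F n Z = (\<Sum>i\<in>{1..Suc n}. \<Sum>j\<in>{1..Suc n}. Mm n i j * Z i j)"
proof -
  have inner: "(\<Sum>j\<in>{1..Suc n}. Mm n i j * Z i j) = (\<Sum>j=1..n+1-i. Z i j)" if "i \<in> {1..Suc n}" for i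
  proof -
    have "(\<Sum>j\<in>{1..Suc n}. Mm n i j * Z i j) = (\<Sum>j\<in>{1..Suc n}. if j \<le> n+1-i then Z i j else 0)"
      using that by (intro sum.cong) (auto simp: Mm_def)
    also have "\<dots> = (\<Sum>j\<in>{1..Suc n} \<inter> {j. j \<le> n+1-i}. Z i j)"
      by (simp add: sum.inter_restrict)
    also have "{1..Suc n} \<inter> {j. j \<le> n+1-i} = {1..n+1-i}" by auto
    finally show ?thesis .
  qed
  have "(\<Sum>i\<in>{1..Suc n}. \<Sum>j\<in>{1..Suc n}. Mm n i j * Z i j) = (\<Sum>i\<in>{1..Suc n}. \<Sum>j=1..n+1-i. Z i j)"
    by (intro sum.cong refl inner)
  also have "\<dots> = (\<Sum>i=1..n. \<Sum>j=1..n+1-i. Z i j)"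
    by (simp add: sum.cl_ivl_Suc)
  finally show ?thesis unfolding F_def by simp
qed

lemma swap3a: "(\<Sum>i\<in>I. \<Sum>j\<in>I. \<Sum>k\<in>I. f i j k) = (\<Sum>j\<in>I. \<Sum>k\<in>I. \<Sum>i\<in>I. (f i j k :: complex))"
proof -
  have "(\<Sum>i\<in>I. \<Sum>j\<in>I. \<Sum>k\<in>I. f i j k) = (\<Sum>j\<in>I. \<Sum>i\<in>I. \<Sum>k\<in>I. f i j k)" by (rule sum.swap)
  also have "\<dots> = (\<Sum>j\<in>I. \<Sum>k\<in>I. \<Sum>i\<in>I. f i j k)" by (intro sum.cong refl sum.swap)
  finally show ?thesis .
qed

lemma swap3b: "(\<Sum>i\<in>I. \<Sum>j\<in>I. \<Sum>k\<in>I. f i j k) = (\<Sum>k\<in>I. \<Sum>i\<in>I. \<Sum>j\<in>I. (f i j k :: complex))"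
proof -
  have "(\<Sum>i\<in>I. \<Sum>j\<in>I. \<Sum>k\<in>I. f i j k) = (\<Sum>i\<in>I. \<Sum>k\<in>I. \<Sum>j\<in>I. f i j k)" by (intro sum.cong refl sum.swap)
  also have "\<dots> = (\<Sum>k\<in>I. \<Sum>i\<in>I. \<Sum>j\<in>I. f i j k)" by (rule sum.swap)
  finally show ?thesis .
qed

lemma Mm_sym: "Mm n i j = Mm n j i"
  unfolding Mm_def by auto

lemma F_bracket: "F n (mbracket (Suc n) X Y) =
   (\<Sum>a\<in>{1..Suc n}. \<Sum>b\<in>{1..Suc n}. (mmult (Suc n) (Mm n) X a b - mmult (Suc n) X (Mm n) a b) * Y b a)"
proof -
  let ?I = "{1..Suc n}"
  have 1: "(\<Sum>i\<in>?I. \<Sum>j\<in>?I. Mm n i j * mmult (Suc n) X Y i j) =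
           (\<Sum>a\<in>?I. \<Sum>b\<in>?I. mmult (Suc n) (Mm n) X a b * Y b a)"
  proof -
    have "(\<Sum>i\<in>?I. \<Sum>j\<in>?I. Mm n i j * mmult (Suc n) X Y i j) = (\<Sum>i\<in>?I. \<Sum>j\<in>?I. \<Sum>k\<in>?I. Mm n i j * X i k * Y k j)"
      unfolding mmult_def by (simp only: sum_distrib_left mult.assoc)
    also have "\<dots> = (\<Sum>j\<in>?I. \<Sum>k\<in>?I. \<Sum>i\<in>?I. Mm n i j * X i k * Y k j)" by (rule swap3a)
    also have "\<dots> = (\<Sum>a\<in>?I. \<Sum>b\<in>?I. \<Sum>c\<in>?I. Mm n a c * X c b * Y b a)"
      by (intro sum.cong refl) (metis Mm_sym)
    also have "\<dots> = (\<Sum>a\<in>?I. \<Sum>b\<in>?I. mmult (Suc n) (Mm n) X a b * Y b a)"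
      unfolding mmult_def by (simp only: sum_distrib_right)
    finally show ?thesis .
  qed
  have 2: "(\<Sum>i\<in>?I. \<Sum>j\<in>?I. Mm n i j * mmult (Suc n) Y X i j) =
           (\<Sum>a\<in>?I. \<Sum>b\<in>?I. mmult (Suc n) X (Mm n) a b * Y b a)"
  proof -
    have "(\<Sum>i\<in>?I. \<Sum>j\<in>?I. Mm n i j * mmult (Suc n) Y X i j) = (\<Sum>i\<in>?I. \<Sum>j\<in>?I. \<Sum>k\<in>?I. Mm n i j * Y i k * X k j)"
      unfolding mmult_def by (simp only: sum_distrib_left mult.assoc)
    also have "\<dots> = (\<Sum>k\<in>?I. \<Sum>i\<in>?I. \<Sum>j\<in>?I. Mm n i j * Y i k * X k j)" by (rule swap3b)
    also have "\<dots> = (\<Sum>a\<in>?I. \<Sum>b\<in>?I. \<Sum>c\<in>?I. X a c * Mm n c b * Y b a)"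
      by (intro sum.cong refl) (metis Mm_sym mult.commute mult.left_commute)
    also have "\<dots> = (\<Sum>a\<in>?I. \<Sum>b\<in>?I. mmult (Suc n) X (Mm n) a b * Y b a)"
      unfolding mmult_def by (simp only: sum_distrib_right)
    finally show ?thesis .
  qed
  show ?thesis unfolding F_expand mbracket_def
    by (simp only: 1[symmetric] 2[symmetric] minus_apply right_diff_distrib left_diff_distrib sum_subtractf)
qed



lemma sum_U: assumes "p \<in> {1..m}" "q \<in> {1..m}"
  shows "(\<Sum>a\<in>{1..m}. \<Sum>b\<in>{1..m}. C a b * Um p q b a) = C q p"
proof -
  have "(\<Sum>a\<in>{1..m}. \<Sum>b\<in>{1..m}. C a b * Um p q b a) = (\<Sum>a\<in>{1..m}. (if a = q then 1 else 0) * C a p)"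
  proof (intro sum.cong refl)
    fix a assume "a \<in> {1..m}"
    have "(\<Sum>b\<in>{1..m}. C a b * Um p q b a) = (\<Sum>b\<in>{1..m}. ((if a = q then 1 else 0) * C a b) * (if b = p then 1 else 0))"
      unfolding Um_def by (intro sum.cong) auto
    also have "\<dots> = (if a = q then 1 else 0) * C a p" using assms by (subst sum_delta3) auto
    finally show "(\<Sum>b\<in>{1..m}. C a b * Um p q b a) = (if a = q then 1 else 0) * C a p" .
  qed
  also have "\<dots> = C q p" using assms by (subst sum_delta2) auto
  finally show ?thesis .
qed

lemma mat_space_U: "p \<in> {1..m} \<Longrightarrow> q \<in> {1..m} \<Longrightarrow> Um p q \<in> mat_space m"
  unfolding mat_space_def Um_def by auto

lemma trace_U: "mtrace m (Um p q) = (if p = q \<and> p \<in> {1..m} then 1 else 0)"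
proof -
  have "mtrace m (Um p q) = (\<Sum>i\<in>{1..m}. if i = p then (if p = q then 1 else 0) else 0)"
    unfolding mtrace_def Um_def by (intro sum.cong) auto
  thus ?thesis by (simp add: sum.delta)
qed

lemma mtrace_diff: "mtrace m (A - B) = mtrace m A - mtrace m B"
  unfolding mtrace_def by (simp add: sum_subtractf)
lemma mtrace_scale: "mtrace m (mscale c A) = c * mtrace m A"
  unfolding mtrace_def mscale_def by (simp add: sum_distrib_left)
lemma mat_space_diff: "A \<in> mat_space m \<Longrightarrow> B \<in> mat_space m \<Longrightarrow> A - B \<in> mat_space m"
  unfolding mat_space_def by auto
lemma mat_space_scale: "A \<in> mat_space m \<Longrightarrow> mscale c A \<in> mat_space m"
  unfolding mat_space_def mscale_def by auto
lemma mat_space_mmult: "A \<in> mat_space m \<Longrightarrow> B \<in> mat_space m \<Longrightarrow> mmult m A B \<in> mat_space m"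
  unfolding mat_space_def mmult_def by auto

lemma Mm_space: "Mm n \<in> mat_space (Suc n)"
  unfolding mat_space_def Mm_def by auto
lemma Nm_space: "Nm n \<in> mat_space (Suc n)"
  unfolding mat_space_def Nm_def by auto
lemma Em_space: "Em n \<in> mat_space (Suc n)"
  unfolding mat_space_def Em_def by auto

lemma comm_out:
  assumes X: "X \<in> mat_space (Suc n)" and ij: "\<not> (i \<in> {1..Suc n} \<and> j \<in> {1..Suc n})"
  shows "mmult (Suc n) (Mm n) X i j = 0" "mmult (Suc n) X (Mm n) i j = 0"
  using mat_space_mmult[OF Mm_space X] mat_space_mmult[OF X Mm_space] ij
  unfolding mat_space_def by auto

lemma kernel_eq: "kirillov_ker (Suc n) (F n) = Kc n"
proof
  let ?I = "{1..Suc n}"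
  show "Kc n \<subseteq> kirillov_ker (Suc n) (F n)"
    unfolding Kc_def kirillov_ker_def by (auto simp: F_bracket)
  show "kirillov_ker (Suc n) (F n) \<subseteq> Kc n"
  proof
    fix X assume XK: "X \<in> kirillov_ker (Suc n) (F n)"
    hence Xsl: "X \<in> sl (Suc n)" and H: "\<And>Y. Y \<in> sl (Suc n) \<Longrightarrow> F n (mbracket (Suc n) X Y) = 0"
      unfolding kirillov_ker_def by auto
    have Xs: "X \<in> mat_space (Suc n)" using Xsl unfolding sl_def by auto
    define C where "C = (\<lambda>a b. mmult (Suc n) (Mm n) X a b - mmult (Suc n) X (Mm n) a b)"
    have HC: "(\<Sum>a\<in>?I. \<Sum>b\<in>?I. C a b * Y b a) = 0" if "Y \<in> sl (Suc n)" for Y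
      using H[OF that] unfolding F_bracket C_def .
    have CU: "C q p = 0" if "p \<in> ?I" "q \<in> ?I" "Um p q \<in> sl (Suc n)" for p q
      using HC[OF that(3)] sum_U[OF that(1,2), of C] by simp
    have Clast: "C (Suc n) (Suc n) = 0" unfolding C_def by (simp add: M_last_row M_last_col)
    have C0: "C i j = 0" for i j
    proof (cases "i \<in> ?I \<and> j \<in> ?I")
      case False thus ?thesis unfolding C_def using comm_out[OF Xs False] by simp
    next
      case True
      show ?thesis
      proof (cases "i = j")
        case False
        have "Um j i \<in> sl (Suc n)" unfolding sl_def using True False
          by (simp add: mat_space_U trace_U)
        thus ?thesis using CU[of j i] True by simp
      next
        case ij: True
        show ?thesis
        proof (cases "i = Suc n")
          case True thus ?thesis using ij Clast by simp
        next
          case False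
          let ?Y = "Um i i - Um (Suc n) (Suc n)"
          have Ysl: "?Y \<in> sl (Suc n)" unfolding sl_def using \<open>i \<in> ?I \<and> j \<in> ?I\<close>
            by (simp add: mat_space_U trace_U mat_space_diff mtrace_diff)
          have "(\<Sum>a\<in>?I. \<Sum>b\<in>?I. C a b * ?Y b a) =
                (\<Sum>a\<in>?I. \<Sum>b\<in>?I. C a b * Um i i b a) - (\<Sum>a\<in>?I. \<Sum>b\<in>?I. C a b * Um (Suc n) (Suc n) b a)"
            by (simp only: minus_apply right_diff_distrib sum_subtractf)
          also have "\<dots> = C i i - C (Suc n) (Suc n)"
          proof -
            have s1: "(\<Sum>a\<in>?I. \<Sum>b\<in>?I. C a b * Um i i b a) = C i i"
              using \<open>i \<in> ?I \<and> j \<in> ?I\<close> by (intro sum_U) auto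
            have s2: "(\<Sum>a\<in>?I. \<Sum>b\<in>?I. C a b * Um (Suc n) (Suc n) b a) = C (Suc n) (Suc n)"
              by (intro sum_U) auto
            show ?thesis by (simp only: s1 s2)
          qed
          finally have "C i i = C (Suc n) (Suc n)" using HC[OF Ysl] by simp
          thus ?thesis using Clast ij by simp
        qed
      qed
    qed
    have "mmult (Suc n) (Mm n) X = mmult (Suc n) X (Mm n)"
      using C0 unfolding C_def by (intro ext) (simp add: right_minus_eq)
    thus "X \<in> Kc n" using Xsl unfolding Kc_def by auto
  qed
qed



lemma last_row_zero:
  assumes C: "mmult (Suc n) (Mm n) X = mmult (Suc n) X (Mm n)" and k: "1 \<le> k" "k \<le> n"
  shows "X (Suc n) k = 0"
proof -
  have "X (Suc n) k = mmult (Suc n) X (Em n) (Suc n) k" using k by (simp add: E_right)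
  also have "mmult (Suc n) X (Em n) = mmult (Suc n) (mmult (Suc n) (Mm n) X) (Nm n)"
    by (simp add: MN[symmetric] mmult_assoc C)
  also have "\<dots> (Suc n) k = 0" by (simp add: N_col M_last_row[simplified])
  finally show ?thesis .
qed

lemma last_col_zero:
  assumes C: "mmult (Suc n) (Mm n) X = mmult (Suc n) X (Mm n)" and k: "1 \<le> k" "k \<le> n"
  shows "X k (Suc n) = 0"
proof -
  have "X k (Suc n) = mmult (Suc n) (Em n) X k (Suc n)" using k by (simp add: E_left)
  also have "mmult (Suc n) (Em n) X = mmult (Suc n) (Nm n) (mmult (Suc n) X (Mm n))"
    by (simp add: NM[symmetric] mmult_assoc C)
  also have "\<dots> k (Suc n) = 0" by (simp add: N_row M_last_col[simplified])
  finally show ?thesis .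
qed

lemma NN_row: assumes "1 \<le> i" "i \<le> n"
  shows "mmult (Suc n) (Nm n) (mmult (Suc n) (Nm n) Y) i j =
    Y i j - (if i + 1 \<le> n then Y (i+1) j else 0) - (if 2 \<le> i then Y (i-1) j - Y i j else 0)"
proof -
  have a: "n + 1 - (n + 1 - i) = i" "n + 2 - (n + 1 - i) = i + 1" using assms by auto
  have b: "2 \<le> i \<Longrightarrow> n + 1 - (n + 2 - i) = i - 1" "2 \<le> i \<Longrightarrow> n + 2 - (n + 2 - i) = i" using assms by auto
  show ?thesis using assms
    by (subst N_row, subst N_row, subst N_row) (auto simp: a b)
qed

lemma NN_col: assumes "1 \<le> j" "j \<le> n"
  shows "mmult (Suc n) (mmult (Suc n) Y (Nm n)) (Nm n) i j =
    Y i j - (if j + 1 \<le> n then Y i (j+1) else 0) - (if 2 \<le> j then Y i (j-1) - Y i j else 0)"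
proof -
  have a: "n + 1 - (n + 1 - j) = j" "n + 2 - (n + 1 - j) = j + 1" using assms by auto
  have b: "2 \<le> j \<Longrightarrow> n + 1 - (n + 2 - j) = j - 1" "2 \<le> j \<Longrightarrow> n + 2 - (n + 2 - j) = j" using assms by auto
  show ?thesis using assms
    by (subst N_col, subst N_col, subst N_col) (auto simp: a b)
qed



lemma uniq:
  assumes XK: "X \<in> Kc n" and col: "\<And>i. 1 \<le> i \<Longrightarrow> i \<le> n \<Longrightarrow> X i 1 = 0"
  shows "X = 0"
proof -
  have Xs: "X \<in> mat_space (Suc n)" and tr: "mtrace (Suc n) X = 0"
    and C: "mmult (Suc n) (Mm n) X = mmult (Suc n) X (Mm n)"
    using XK unfolding Kc_def sl_def by auto
  have Xz: "X i j = 0" if "\<not> (i \<in> {1..Suc n} \<and> j \<in> {1..Suc n})" for i j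
    using Xs that unfolding mat_space_def by blast
  define Y where "Y = mmult (Suc n) X (Em n)"
  have EX: "mmult (Suc n) (Em n) X = Y"
  proof (intro ext)
    fix i j
    show "mmult (Suc n) (Em n) X i j = Y i j"
      unfolding Y_def E_left E_right
      using Xz[of i j] last_row_zero[OF C, of j] last_col_zero[OF C, of i]
      by (cases "i = Suc n"; cases "j = Suc n") auto
  qed
  have NY: "mmult (Suc n) (Nm n) Y = mmult (Suc n) Y (Nm n)"
  proof -
    have "mmult (Suc n) (Nm n) Y = mmult (Suc n) (Nm n) (mmult (Suc n) (mmult (Suc n) (Mm n) X) (Nm n))"
      unfolding Y_def by (simp add: MN[symmetric] mmult_assoc C)
    also have "\<dots> = mmult (Suc n) (mmult (Suc n) (Em n) X) (Nm n)"
      by (simp add: NM[symmetric] mmult_assoc)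
    finally show ?thesis using EX by simp
  qed
  have NNY: "mmult (Suc n) (Nm n) (mmult (Suc n) (Nm n) Y) = mmult (Suc n) (mmult (Suc n) Y (Nm n)) (Nm n)"
    by (simp add: NY mmult_assoc[symmetric])
  have rec: "Y i j - (if i + 1 \<le> n then Y (i+1) j else 0) - (if 2 \<le> i then Y (i-1) j - Y i j else 0)
     = Y i j - (if j + 1 \<le> n then Y i (j+1) else 0) - (if 2 \<le> j then Y i (j-1) - Y i j else 0)"
    if "1 \<le> i" "i \<le> n" "1 \<le> j" "j \<le> n" for i j
    using NN_row[OF that(1,2), of Y j] NN_col[OF that(3,4), of Y i] NNY by simp
  have Ycol1: "Y i 1 = 0" if "1 \<le> i" "i \<le> n" for i
    unfolding Y_def E_right using that col assms by simp
  have P: "\<forall>i. 1 \<le> i \<longrightarrow> i \<le> n \<longrightarrow> Y i j = 0" if "1 \<le> j" "j \<le> n" for j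
    using that
  proof (induction j rule: less_induct)
    case (less j)
    show ?case
    proof (cases "j = 1")
      case True thus ?thesis using Ycol1 by simp
    next
      case False
      then obtain j' where j': "j = j' + 1" "1 \<le> j'" using less.prems by (cases j) auto
      have IH1: "\<forall>i. 1 \<le> i \<longrightarrow> i \<le> n \<longrightarrow> Y i j' = 0" using less.IH[of j'] j' less.prems by simp
      have IH2: "\<forall>i. 1 \<le> i \<longrightarrow> i \<le> n \<longrightarrow> Y i (j'-1) = 0" if "2 \<le> j'"
        using less.IH[of "j'-1"] j' less.prems that by simp
      show ?thesis
      proof (intro allI impI)
        fix i assume i: "1 \<le> i" "i \<le> n"
        have e: "Y i j' - (if i + 1 \<le> n then Y (i+1) j' else 0) - (if 2 \<le> i then Y (i-1) j' - Y i j' else 0) = 0"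
          using IH1 i by auto
        have f: "(if 2 \<le> j' then Y i (j'-1) - Y i j' else 0) = 0" using IH1 IH2 i by auto
        have "Y i j' - Y i (j'+1) = 0" using rec[OF i(1,2) j'(2)] less.prems j' e f IH1 i by simp
        thus "Y i j = 0" using IH1 i j' by simp
      qed
    qed
  qed
  have blk: "X i j = 0" if "1 \<le> i" "i \<le> n" "1 \<le> j" "j \<le> n" for i j
    using P[OF that(3,4)] that unfolding Y_def E_right by simp
  have notcorner: "X i j = 0" if "\<not> (i = Suc n \<and> j = Suc n)" for i j
  proof (cases "i \<in> {1..Suc n} \<and> j \<in> {1..Suc n}")
    case False thus ?thesis by (rule Xz)
  next
    case True
    show ?thesis
    proof (cases "i = Suc n")
      case True
      hence "1 \<le> j" "j \<le> n" using \<open>i \<in> {1..Suc n} \<and> j \<in> {1..Suc n}\<close> that by auto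
      thus ?thesis using True last_row_zero[OF C] by simp
    next
      case False
      hence i: "1 \<le> i" "i \<le> n" using \<open>i \<in> {1..Suc n} \<and> j \<in> {1..Suc n}\<close> by auto
      show ?thesis
      proof (cases "j = Suc n")
        case True thus ?thesis using i last_col_zero[OF C] by simp
      next
        case False
        hence "1 \<le> j" "j \<le> n" using \<open>i \<in> {1..Suc n} \<and> j \<in> {1..Suc n}\<close> by auto
        thus ?thesis using i blk by simp
      qed
    qed
  qed
  have "mtrace (Suc n) X = X (Suc n) (Suc n)"
    unfolding mtrace_def using notcorner by (simp add: sum.cl_ivl_Suc)
  hence corner: "X (Suc n) (Suc n) = 0" using tr by simp
  show "X = 0"
    by (intro ext) (metis corner notcorner zero_fun_apply)
qed



definition Tm :: "nat \<Rightarrow> cmat" where "Tm n = mmult (Suc n) (Nm n) (Nm n)"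
primrec Tp :: "nat \<Rightarrow> nat \<Rightarrow> cmat" where
  "Tp n 0 = Em n"
| "Tp n (Suc k) = mmult (Suc n) (Tm n) (Tp n k)"
definition Dm :: "nat \<Rightarrow> cmat" where "Dm n = Um (Suc n) (Suc n)"
definition Bm :: "nat \<Rightarrow> nat \<Rightarrow> cmat" where
  "Bm n k = Tp n k - mscale (mtrace (Suc n) (Tp n k)) (Dm n)"

lemma sum_fun2: "(\<Sum>k\<in>A. G k) i j = (\<Sum>k\<in>A. (G k i j :: complex))"
  by (induction A rule: infinite_finite_induct) auto

lemma Tm_space: "Tm n \<in> mat_space (Suc n)"
  unfolding Tm_def by (intro mat_space_mmult Nm_space)

lemma Tp_space: "Tp n k \<in> mat_space (Suc n)"
  by (induction k) (auto intro: Em_space mat_space_mmult Tm_space)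

lemma MT: "mmult (Suc n) (Mm n) (Tm n) = mmult (Suc n) (Tm n) (Mm n)"
proof -
  have "mmult (Suc n) (Mm n) (Tm n) = Nm n" unfolding Tm_def by (simp add: mmult_assoc[symmetric] MN EN)
  moreover have "mmult (Suc n) (Tm n) (Mm n) = Nm n" unfolding Tm_def by (simp add: mmult_assoc NM NE)
  ultimately show ?thesis by simp
qed

lemma Tp_comm: "mmult (Suc n) (Mm n) (Tp n k) = mmult (Suc n) (Tp n k) (Mm n)"
proof (induction k)
  case 0 thus ?case by (simp add: ME EM)
next
  case (Suc k)
  have "mmult (Suc n) (Mm n) (Tp n (Suc k)) = mmult (Suc n) (mmult (Suc n) (Tm n) (Mm n)) (Tp n k)"
    by (simp add: mmult_assoc[symmetric] MT)
  also have "\<dots> = mmult (Suc n) (Tp n (Suc k)) (Mm n)"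
    by (simp add: mmult_assoc Suc)
  finally show ?case .
qed

lemma MD: "mmult (Suc n) (Mm n) (Dm n) = 0"
  unfolding Dm_def by (intro ext) (simp add: U_right Mm_def)
lemma DM: "mmult (Suc n) (Dm n) (Mm n) = 0"
  unfolding Dm_def by (intro ext) (simp add: U_left Mm_def)

lemma mmult_zero_right: "mmult m A 0 = 0" unfolding mmult_def by (intro ext) simp
lemma mmult_zero_left: "mmult m 0 A = 0" unfolding mmult_def by (intro ext) simp
lemma mscale_zero: "mscale c 0 = 0" unfolding mscale_def by (intro ext) simp

lemma Kc_closed: assumes "A \<in> Kc n" "B \<in> Kc n" shows "A - mscale c B \<in> Kc n"
  using assms unfolding Kc_def sl_def
  by (auto simp: mat_space_diff mat_space_scale mtrace_diff mtrace_scale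
      mmult_diff_right mmult_diff_left mmult_scale_right mmult_scale_left)

lemma Bm_Kc: "Bm n k \<in> Kc n"
proof -
  have D: "Dm n \<in> mat_space (Suc n)" unfolding Dm_def by (rule mat_space_U) auto
  have trD: "mtrace (Suc n) (Dm n) = 1" unfolding Dm_def by (simp add: trace_U)
  show ?thesis unfolding Kc_def sl_def Bm_def
    using Tp_space[of n k] D trD Tp_comm[of n k] MD[of n] DM[of n]
    by (auto simp: mat_space_diff mat_space_scale mtrace_diff mtrace_scale
      mmult_diff_right mmult_diff_left mmult_scale_right mmult_scale_left)
qed

lemma Bm_col1: "1 \<le> n \<Longrightarrow> Bm n k i 1 = Tp n k i 1"
  unfolding Bm_def Dm_def Um_def mscale_def by simp

lemma Tp_col: assumes "k + 1 \<le> n"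
  shows "Tp n k (k+1) 1 = (-1)^k \<and> (\<forall>i. k + 1 < i \<longrightarrow> Tp n k i 1 = 0)"
  using assms
proof (induction k)
  case 0
  thus ?case by (simp add: Em_def)
next
  case (Suc k)
  have IH: "Tp n k (k+1) 1 = (-1)^k" "\<And>i. k + 1 < i \<Longrightarrow> Tp n k i 1 = 0" using Suc by auto
  have T: "Tp n (Suc k) = mmult (Suc n) (Nm n) (mmult (Suc n) (Nm n) (Tp n k))"
    by (simp add: Tm_def mmult_assoc)
  have a: "Tp n (Suc k) (k+2) 1 = (-1)^(Suc k)"
    unfolding T using Suc.prems IH by (subst NN_row) auto
  have b: "Tp n (Suc k) i 1 = 0" if "k + 2 < i" for i
  proof (cases "i \<le> n")
    case True thus ?thesis unfolding T using that IH by (subst NN_row) auto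
  next
    case False thus ?thesis unfolding T by (simp add: N_row)
  qed
  show ?case using a b by auto
qed



lemma Bm_col1': "1 \<le> n \<Longrightarrow> Bm n k i (Suc 0) = Tp n k i (Suc 0)"
  using Bm_col1[of n k i] by simp

lemma span_step:
  assumes n: "1 \<le> n" and kn: "k \<le> n"
  shows "\<forall>X \<in> Kc n. (\<forall>i. k < i \<longrightarrow> X i 1 = 0) \<longrightarrow> X \<in> mv.span (Bm n ` {..<n})"
  using kn
proof (induction k)
  case 0
  show ?case
  proof (intro ballI impI)
    fix X assume X: "X \<in> Kc n" "\<forall>i. 0 < i \<longrightarrow> X i 1 = 0"
    have "X = 0" by (rule uniq[OF X(1)]) (use X(2) in auto)
    thus "X \<in> mv.span (Bm n ` {..<n})" by (simp add: mv.span_zero)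
  qed
next
  case (Suc k)
  show ?case
  proof (intro ballI impI)
    fix X assume X: "X \<in> Kc n" "\<forall>i. Suc k < i \<longrightarrow> X i 1 = 0"
    define c where "c = X (k+1) 1 * (-1)^k"
    define Z where "Z = X - mscale c (Bm n k)"
    have ZK: "Z \<in> Kc n" unfolding Z_def by (rule Kc_closed[OF X(1) Bm_Kc])
    have tc: "Tp n k (k+1) 1 = (-1)^k" "\<And>i. k + 1 < i \<Longrightarrow> Tp n k i 1 = 0"
      using Tp_col[of k n] Suc.prems by auto
    have Zc: "\<forall>i. k < i \<longrightarrow> Z i 1 = 0"
    proof (intro allI impI)
      fix i assume "k < i"
      show "Z i 1 = 0"
      proof (cases "i = k + 1")
        case True
        have "((-1::complex)^k) * (-1)^k = 1" by (simp add: power_mult_distrib[symmetric])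
        thus ?thesis unfolding Z_def c_def using True tc n
          by (simp add: Bm_col1 Bm_col1' mscale_def mult.assoc)
      next
        case False
        thus ?thesis unfolding Z_def using \<open>k < i\<close> X(2) tc n by (simp add: Bm_col1 Bm_col1' mscale_def)
      qed
    qed
    have "Z \<in> mv.span (Bm n ` {..<n})" using Suc.IH Suc.prems ZK Zc by auto
    moreover have "mscale c (Bm n k) \<in> mv.span (Bm n ` {..<n})"
      using Suc.prems by (intro mv.span_scale mv.span_base) auto
    ultimately have "Z + mscale c (Bm n k) \<in> mv.span (Bm n ` {..<n})" by (rule mv.span_add)
    thus "X \<in> mv.span (Bm n ` {..<n})" unfolding Z_def by simp
  qed
qed

lemma Kc_span: assumes n: "1 \<le> n" shows "Kc n \<subseteq> mv.span (Bm n ` {..<n})"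
proof
  fix X assume X: "X \<in> Kc n"
  have "\<forall>i. n < i \<longrightarrow> X i 1 = 0"
  proof (intro allI impI)
    fix i assume "n < i"
    show "X i 1 = 0"
    proof (cases "i = Suc n")
      case True
      have C: "mmult (Suc n) (Mm n) X = mmult (Suc n) X (Mm n)" using X unfolding Kc_def by auto
      show ?thesis using last_row_zero[OF C, of 1] n True by simp
    next
      case False
      thus ?thesis using X \<open>n < i\<close> unfolding Kc_def sl_def mat_space_def by auto
    qed
  qed
  thus "X \<in> mv.span (Bm n ` {..<n})" using span_step[OF n order_refl] X by auto
qed

lemma indep_aux:
  assumes n: "1 \<le> n"
  shows "N \<le> n \<Longrightarrow> (\<Sum>k<N. mscale (g k) (Bm n k)) = 0 \<Longrightarrow> \<forall>k<N. g k = 0"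
proof (induction N)
  case 0 thus ?case by simp
next
  case (Suc N)
  have tc: "Tp n N (N+1) 1 = (-1)^N" using Tp_col[of N n] Suc.prems by auto
  have low: "Tp n k (N+1) 1 = 0" if "k < N" for k using Tp_col[of k n] Suc.prems that by auto
  have h: "(\<Sum>k<Suc N. mscale (g k) (Bm n k)) = 0" by (rule Suc.prems(2))
  have "(\<Sum>k<Suc N. mscale (g k) (Bm n k)) (N+1) 1 = 0" by (simp only: h zero_fun_apply)
  hence "(\<Sum>k<N. g k * Bm n k (N+1) 1) + g N * Bm n N (N+1) 1 = 0"
    by (simp add: sum_fun2 mscale_def)
  moreover have "(\<Sum>k<N. g k * Bm n k (N+1) 1) = 0" using low n by (simp add: Bm_col1 Bm_col1')
  ultimately have "g N * (-1)^N = 0" using tc n by (simp add: Bm_col1 Bm_col1')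
  hence gN: "g N = 0" by simp
  have m0: "mscale (g N) (Bm n N) = 0" unfolding mscale_def using gN by (simp add: fun_eq_iff)
  have "(\<Sum>k<N. mscale (g k) (Bm n k)) = 0"
    using Suc.prems(2) by (simp only: sum.lessThan_Suc m0 add_0_right)
  hence "\<forall>k<N. g k = 0" using Suc.IH Suc.prems by simp
  thus ?case using gN less_Suc_eq by auto
qed

lemma Bm_inj: assumes n: "1 \<le> n" shows "inj_on (Bm n) {..<n}"
proof (rule inj_onI)
  fix a b assume ab: "a \<in> {..<n}" "b \<in> {..<n}" "Bm n a = Bm n b"
  show "a = b"
  proof (rule ccontr)
    assume "a \<noteq> b"
    then consider "a < b" | "b < a" by linarith
    thus False
    proof cases
      case 1
      have "Bm n b (b+1) 1 = (-1)^b" using Tp_col[of b n] ab(1,2) n by (simp add: Bm_col1 Bm_col1')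
      moreover have "Bm n a (b+1) 1 = 0" using Tp_col[of a n] ab(1,2) n 1 by (simp add: Bm_col1 Bm_col1')
      ultimately show False using ab(3) by simp
    next
      case 2
      have "Bm n a (a+1) 1 = (-1)^a" using Tp_col[of a n] ab(1,2) n by (simp add: Bm_col1 Bm_col1')
      moreover have "Bm n b (a+1) 1 = 0" using Tp_col[of b n] ab(1,2) n 2 by (simp add: Bm_col1 Bm_col1')
      ultimately show False using ab(3) by simp
    qed
  qed
qed

lemma Bm_indep: assumes n: "1 \<le> n" shows "mv.independent (Bm n ` {..<n})"
proof (rule mv.independent_if_scalars_zero)
  show "finite (Bm n ` {..<n})" by simp
  fix f x assume s: "(\<Sum>x\<in>Bm n ` {..<n}. mscale (f x) x) = 0" and x: "x \<in> Bm n ` {..<n}"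
  have "(\<Sum>k<n. mscale (f (Bm n k)) (Bm n k)) = 0"
    using s by (simp add: sum.reindex[OF Bm_inj[OF n]])
  hence "\<forall>k<n. f (Bm n k) = 0" using indep_aux[OF n order_refl, of "\<lambda>k. f (Bm n k)"] by simp
  thus "f x = 0" using x by auto
qed

theorem theorem4p3:
  fixes n :: nat
  assumes "n \<ge> 1"
  shows "cdim (kirillov_ker (n + 1) (F n)) = n"
proof -
  have "kirillov_ker (n + 1) (F n) = Kc n" using kernel_eq[of n] by simp
  moreover have "card (Bm n ` {..<n}) = mv.dim (Kc n)"
    by (rule mv.basis_card_eq_dim) (use Bm_Kc Kc_span[OF assms] Bm_indep[OF assms] in auto)
  moreover have "card (Bm n ` {..<n}) = n" using card_image[OF Bm_inj[OF assms]] by simp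
  ultimately show ?thesis unfolding cdim_def by simp
qed

end
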